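(* Let $\mathbb{E}$ be a finite-dimensional Euclidean space, $\mathcal{K}\subseteq\mathbb{E}$ a closed convex cone, $\mathcal{A}:\mathbb{E}\to\mathbb{R}^m$ a surjective linear map and $b\in\mathbb{R}^m$, and let $\mathcal{F}=\{x\in\mathcal{K}:\mathcal{A}x=b\}\neq\emptyset$. Suppose that strict feasibility fails for $\mathcal{F}$, i.e. $\mathcal{F}\cap\operatorname{relint}(\mathcal{K})=\emptyset$. Then every point of $\mathcal{F}$ is degenerate.
   Context: $\mathcal{K}^*=\{z\in\mathbb{E}:\langle z,x\rangle\ge 0\ \forall x\in\mathcal{K}\}$ is the dual cone. For $\bar x\in\mathcal{K}$, $\operatorname{face}(\bar x,\mathcal{K})$ denotes the minimal face of $\mathcal{K}$ containing $\bar x$ (the intersection of all faces of $\mathcal{K}$ containing $\bar x$). For a face $f$ of $\mathcal{K}$, its conjugate face is $f^\Delta=\{z\in\mathcal{K}^*:\langle z,x\rangle=0\ \forall x\in f\}$. A point $\bar x\in\mathcal{F}$ is called nondegenerate if $\operatorname{span}\big(\operatorname{face}(\bar x,\mathcal{K})^\Delta\big)\cap\mathcal{R}(\mathcal{A}^* )=\{0\}$, where $\mathcal{R}(\mathcal{A}^* )$ is the range of the adjoint $\mathcal{A}^*$; otherwise $\bar x$ is degenerate. *)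

theory Defs
  imports "HOL-Analysis.Analysis"
begin

definition dual_cone :: "'a::real_inner set \<Rightarrow> 'a set" where
  "dual_cone K = {z. \<forall>x\<in>K. inner z x \<ge> 0}"

definition min_face :: "'a::real_vector \<Rightarrow> 'a set \<Rightarrow> 'a set" where
  "min_face x K = \<Inter>{f. f face_of K \<and> x \<in> f}"

definition conj_face :: "'a::real_inner set \<Rightarrow> 'a set \<Rightarrow> 'a set" where
  "conj_face K f = {z \<in> dual_cone K. \<forall>x\<in>f. inner z x = 0}"

definition feas_set :: "'a::real_vector set \<Rightarrow> ('a \<Rightarrow> 'b) \<Rightarrow> 'b \<Rightarrow> 'a set" where
  "feas_set K A b = {x \<in> K. A x = b}"

definition nondegenerate :: "'a::real_inner set \<Rightarrow> ('a \<Rightarrow> 'b::real_inner) \<Rightarrow> 'a \<Rightarrow> bool" where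
  "nondegenerate K A x \<longleftrightarrow> span (conj_face K (min_face x K)) \<inter> range (adjoint A) = {0}"

definition degenerate :: "'a::real_inner set \<Rightarrow> ('a \<Rightarrow> 'b::real_inner) \<Rightarrow> 'a \<Rightarrow> bool" where
  "degenerate K A x \<longleftrightarrow> \<not> nondegenerate K A x"

end

theory Submission
  imports Defs
begin

lemma perp_kernel_in_range_adjoint:
  fixes A :: "'a::euclidean_space \<Rightarrow> 'b::euclidean_space"
  assumes lin: "linear A" and perp: "\<And>m. A m = 0 \<Longrightarrow> a \<bullet> m = 0"
  shows "a \<in> range (adjoint A)"
proof -
  obtain v w where v: "v \<in> span (range (adjoint A))"
    and w: "\<And>u. u \<in> span (range (adjoint A)) \<Longrightarrow> orthogonal w u"
    and avw: "a = v + w"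
    using orthogonal_subspace_decomp_exists by blast
  have lin2: "linear (adjoint A)" using lin adjoint_linear by blast
  have vr: "v \<in> range (adjoint A)" using v span_linear_image[OF lin2, of UNIV] span_UNIV by (metis rangeI image_iff)
  have "A w \<bullet> y = 0" for y
  proof -
    have "orthogonal w (adjoint A y)" using w span_base by blast
    then have "w \<bullet> adjoint A y = 0" by (simp add: orthogonal_def)
    then show ?thesis using adjoint_works[OF lin] by simp
  qed
  then have "A w \<bullet> A w = 0" by blast
  then have Aw: "A w = 0" by simp
  have "a \<bullet> w = 0" using perp Aw by blast
  moreover have "v \<bullet> w = 0" using w v by (simp add: orthogonal_def inner_commute)
  ultimately have "w \<bullet> w = 0" using avw by (simp add: inner_add_left)
  then have "w = 0" by simp
  then show ?thesis using vr avw by simp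
qed

theorem theorem3p1:
  fixes K :: "'a::euclidean_space set"
    and A :: "'a \<Rightarrow> real ^ 'm"
    and b :: "real ^ 'm"
  assumes "closed K" and "convex_cone K"
    and "linear A" and "surj A"
    and "feas_set K A b \<noteq> {}"
    and "feas_set K A b \<inter> rel_interior K = {}"
  shows "\<forall>x \<in> feas_set K A b. degenerate K A x"
proof
  fix x assume xF: "x \<in> feas_set K A b"
  have xK: "x \<in> K" and Ax: "A x = b" using xF by (auto simp: feas_set_def)
  have cvx: "convex K" and cone: "conic K" using assms(2) by (auto simp: convex_cone_def)
  define M where "M = {m. A m = 0}"
  have subM: "subspace M" unfolding M_def subspace_def
    using linear_add[OF assms(3)] linear_scale[OF assms(3)] linear_0[OF assms(3)] by simp
  have cvxM: "convex M" using subM subspace_imp_convex by blast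
  have affM: "affine M" using subM subspace_imp_affine by blast
  have ri: "rel_interior (K + M) = rel_interior K + M"
    using rel_interior_sum[OF cvx cvxM] rel_interior_affine[OF affM] by simp
  have cvxC: "convex (K + M)" using cvx cvxM convex_set_plus by blast
  have "0 \<in> M" using subM subspace_0 by blast
  then have xC: "x \<in> K + M" using xK set_plus_intro[of x K 0 M] by simp
  have xnri: "x \<notin> rel_interior (K + M)"
  proof
    assume "x \<in> rel_interior (K + M)"
    then obtain k m where k: "k \<in> rel_interior K" and m: "m \<in> M" and xkm: "x = k + m"
      using ri unfolding set_plus_def by blast
    have "A k = A x - A m" using xkm linear_add[OF assms(3)] by simp
    then have "A k = b" using m Ax by (simp add: M_def)
    moreover have "k \<in> K" using k rel_interior_subset by blast
    ultimately show False using assms(6) k by (auto simp: feas_set_def)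
  qed
  obtain a where a0: "a \<noteq> 0" and ale: "\<And>y. y \<in> K + M \<Longrightarrow> a \<bullet> x \<le> a \<bullet> y"
    and "\<And>y. y \<in> rel_interior (K + M) \<Longrightarrow> a \<bullet> x < a \<bullet> y"
    by (rule supporting_hyperplane_rel_boundary[OF cvxC xC xnri]) blast+
  have aK: "a \<bullet> x \<le> a \<bullet> k" if "k \<in> K" for k
    using ale[of "k + 0"] \<open>0 \<in> M\<close> that set_plus_intro[of k K 0 M] by simp
  have aM: "a \<bullet> m = 0" if "m \<in> M" for m
  proof -
    have "(-1) *\<^sub>R m \<in> M" "2 *\<^sub>R m \<in> M" using subM that subspace_scale by blast+
    then have "x + (-1) *\<^sub>R m \<in> K + M" "x + 2 *\<^sub>R m \<in> K + M" using set_plus_intro[OF xK] by blast+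
    then have "a \<bullet> x \<le> a \<bullet> (x + (-1) *\<^sub>R m)" "a \<bullet> x \<le> a \<bullet> (x + 2 *\<^sub>R m)" using ale by blast+
    then show ?thesis by (simp add: inner_add_right inner_diff_right)
  qed
  have "0 \<in> K" using cone xK conic_contains_0 by blast
  have "2 *\<^sub>R x \<in> K" using conic_mul[OF cone xK, of 2] by simp
  have ax0: "a \<bullet> x = 0" using aK[OF \<open>0 \<in> K\<close>] aK[OF \<open>2 *\<^sub>R x \<in> K\<close>] by simp
  have aKge: "a \<bullet> k \<ge> 0" if "k \<in> K" for k using aK[OF that] ax0 by simp
  have adual: "a \<in> dual_cone K" using aKge by (simp add: dual_cone_def)
  have face: "(K \<inter> {y. (-a) \<bullet> y = 0}) face_of K"
    using face_of_Int_supporting_hyperplane_le[OF cvx, of "-a" 0] aKge by simp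
  have "x \<in> K \<inter> {y. (-a) \<bullet> y = 0}" using xK ax0 by simp
  then have "min_face x K \<subseteq> K \<inter> {y. (-a) \<bullet> y = 0}"
    using face unfolding min_face_def by blast
  then have "a \<in> conj_face K (min_face x K)"
    using adual unfolding conj_face_def by auto
  then have as: "a \<in> span (conj_face K (min_face x K))" using span_base by blast
  have ar: "a \<in> range (adjoint A)"
    using perp_kernel_in_range_adjoint[OF assms(3)] aM by (simp add: M_def)
  show "degenerate K A x"
    unfolding degenerate_def nondegenerate_def using as ar a0 by blast
qed

end
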